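(* Let $\Pi$ be an indecomposable reduced crystallographic root system. Let $\gamma \in \Pi_+$, $\alpha \in \Delta$ and an integer $c > 0$ be such that $\gamma - c\alpha \in \Pi_+$. Let $\beta \in \Pi_+$ satisfy $\beta \le \gamma$, $c_\alpha(\beta) = c_\alpha(\gamma)$ and $\beta \neq \alpha$. Then $\beta - c\alpha \in \Pi_+$.
   Context: $\Delta$ denotes the simple roots and $\Pi_+$ the positive roots. For a root $\beta$, $c_\alpha(\beta)$ is the coefficient of $\alpha$ in the expansion $\beta = \sum_{\alpha\in\Delta} c_\alpha(\beta)\alpha$. $\beta\le\gamma$ iff $\gamma-\beta$ is a nonnegative integer combination of simple roots. *)

theory Defs
  imports "HOL-Analysis.Analysis"
begin

definition refl_root :: "'a::euclidean_space \<Rightarrow> 'a \<Rightarrow> 'a" where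
  "refl_root \<alpha> x = x - (2 * (x \<bullet> \<alpha>) / (\<alpha> \<bullet> \<alpha>)) *\<^sub>R \<alpha>"

definition root_system :: "'a::euclidean_space set \<Rightarrow> bool" where
  "root_system \<Phi> \<longleftrightarrow> finite \<Phi> \<and> 0 \<notin> \<Phi> \<and> span \<Phi> = UNIV \<and>
     (\<forall>\<alpha>\<in>\<Phi>. refl_root \<alpha> ` \<Phi> = \<Phi>)"

definition crystallographic :: "'a::euclidean_space set \<Rightarrow> bool" where
  "crystallographic \<Phi> \<longleftrightarrow> (\<forall>\<alpha>\<in>\<Phi>. \<forall>\<beta>\<in>\<Phi>. 2 * (\<beta> \<bullet> \<alpha>) / (\<alpha> \<bullet> \<alpha>) \<in> \<int>)"

definition reduced :: "'a::euclidean_space set \<Rightarrow> bool" where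
  "reduced \<Phi> \<longleftrightarrow> (\<forall>\<alpha>\<in>\<Phi>. \<forall>c::real. c *\<^sub>R \<alpha> \<in> \<Phi> \<longrightarrow> c = 1 \<or> c = -1)"

definition indecomposable :: "'a::euclidean_space set \<Rightarrow> bool" where
  "indecomposable \<Phi> \<longleftrightarrow> \<Phi> \<noteq> {} \<and>
     \<not> (\<exists>A B. A \<noteq> {} \<and> B \<noteq> {} \<and> A \<union> B = \<Phi> \<and> A \<inter> B = {} \<and>
            (\<forall>a\<in>A. \<forall>b\<in>B. a \<bullet> b = 0))"

definition nonneg_comb :: "'a::euclidean_space set \<Rightarrow> 'a \<Rightarrow> bool" where
  "nonneg_comb \<Delta> v \<longleftrightarrow> (\<exists>k::'a \<Rightarrow> nat. v = (\<Sum>\<alpha>\<in>\<Delta>. real (k \<alpha>) *\<^sub>R \<alpha>))"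

definition is_base :: "'a::euclidean_space set \<Rightarrow> 'a set \<Rightarrow> bool" where
  "is_base \<Phi> \<Delta> \<longleftrightarrow> \<Delta> \<subseteq> \<Phi> \<and> independent \<Delta> \<and>
     (\<forall>\<beta>\<in>\<Phi>. nonneg_comb \<Delta> \<beta> \<or> nonneg_comb \<Delta> (- \<beta>))"

definition pos_roots :: "'a::euclidean_space set \<Rightarrow> 'a set \<Rightarrow> 'a set" where
  "pos_roots \<Phi> \<Delta> = {\<beta>\<in>\<Phi>. nonneg_comb \<Delta> \<beta>}"

definition coeff_root :: "'a::euclidean_space set \<Rightarrow> 'a \<Rightarrow> 'a \<Rightarrow> real" where
  "coeff_root \<Delta> \<alpha> \<beta> = representation \<Delta> \<beta> \<alpha>"

definition root_le :: "'a::euclidean_space set \<Rightarrow> 'a \<Rightarrow> 'a \<Rightarrow> bool" where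
  "root_le \<Delta> \<beta> \<gamma> \<longleftrightarrow> nonneg_comb \<Delta> (\<gamma> - \<beta>)"

end

theory Submission imports Defs begin

locale RS =
  fixes \<Phi> \<Delta> :: "'a::euclidean_space set"
  assumes rs: "root_system \<Phi>" and cr: "crystallographic \<Phi>" and red: "reduced \<Phi>"
    and base: "is_base \<Phi> \<Delta>"
begin

definition co :: "'a \<Rightarrow> 'a \<Rightarrow> real" where "co v e = representation \<Delta> v e"

lemma finP: "finite \<Phi>" and zP: "0 \<notin> \<Phi>" and spanP: "span \<Phi> = UNIV"
  and reflP: "\<And>a. a \<in> \<Phi> \<Longrightarrow> refl_root a ` \<Phi> = \<Phi>"
  using rs unfolding root_system_def by auto

lemma DP: "\<Delta> \<subseteq> \<Phi>" and indep: "independent \<Delta>"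
  and pn: "\<And>b. b \<in> \<Phi> \<Longrightarrow> nonneg_comb \<Delta> b \<or> nonneg_comb \<Delta> (- b)"
  using base unfolding is_base_def by auto

lemma finD: "finite \<Delta>" using DP finP finite_subset by blast

lemma nn_span: "nonneg_comb \<Delta> v \<Longrightarrow> v \<in> span \<Delta>"
  unfolding nonneg_comb_def
  by (metis (no_types, lifting) span_base span_scale span_sum)

lemma spanD: "v \<in> span \<Delta>"
proof -
  have "\<Phi> \<subseteq> span \<Delta>"
  proof
    fix b assume "b \<in> \<Phi>"
    then show "b \<in> span \<Delta>" using pn[of b] nn_span span_neg by fastforce
  qed
  then have "span \<Phi> \<subseteq> span \<Delta>" by (simp add: span_minimal)
  then show ?thesis using spanP by auto
qed

lemma co_add: "co (u + v) e = co u e + co v e"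
  unfolding co_def using representation_add[OF indep spanD spanD] by simp
lemma co_diff: "co (u - v) e = co u e - co v e"
  unfolding co_def using representation_diff[OF indep spanD spanD] by simp
lemma co_neg: "co (- v) e = - co v e"
  unfolding co_def using representation_neg[OF indep spanD] by simp
lemma co_scale: "co (r *\<^sub>R v) e = r * co v e"
  unfolding co_def using representation_scale[OF indep spanD] by simp
lemma co_zero: "co 0 e = 0" using co_diff[of 0 0 e] by simp
lemma co_basis: "d \<in> \<Delta> \<Longrightarrow> co d e = (if e = d then 1 else 0)"
  unfolding co_def using representation_basis[OF indep] by simp
lemma expand: "v = (\<Sum>e\<in>\<Delta>. co v e *\<^sub>R e)"
  unfolding co_def using sum_representation_eq[OF indep spanD finD] by simp

lemma co_sum: "co (\<Sum>e\<in>\<Delta>. f e *\<^sub>R e) d = (if d \<in> \<Delta> then f d else 0)"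
proof -
  have "co (\<Sum>e\<in>\<Delta>. f e *\<^sub>R e) d = (\<Sum>e\<in>\<Delta>. co (f e *\<^sub>R e) d)"
    unfolding co_def using representation_sum[OF indep spanD, of "\<lambda>e. f e *\<^sub>R e" \<Delta>] by simp
  also have "\<dots> = (\<Sum>e\<in>\<Delta>. (if d = e then f e else 0))"
    by (intro sum.cong) (auto simp: co_scale co_basis)
  also have "\<dots> = (if d \<in> \<Delta> then f d else 0)"
    using finD by (simp add: sum.delta)
  finally show ?thesis .
qed

lemma nn_iff: "nonneg_comb \<Delta> v \<longleftrightarrow> (\<forall>e\<in>\<Delta>. \<exists>n::nat. co v e = real n)"
proof
  assume "nonneg_comb \<Delta> v"
  then obtain k :: "'a \<Rightarrow> nat" where "v = (\<Sum>e\<in>\<Delta>. real (k e) *\<^sub>R e)"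
    unfolding nonneg_comb_def by blast
  then show "\<forall>e\<in>\<Delta>. \<exists>n::nat. co v e = real n" using co_sum by auto
next
  assume h: "\<forall>e\<in>\<Delta>. \<exists>n::nat. co v e = real n"
  define k where "k e = nat \<lfloor>co v e\<rfloor>" for e
  have "v = (\<Sum>e\<in>\<Delta>. co v e *\<^sub>R e)" by (rule expand)
  also have "\<dots> = (\<Sum>e\<in>\<Delta>. real (k e) *\<^sub>R e)"
    by (intro sum.cong refl) (use h in \<open>auto simp: k_def\<close>)
  finally show "nonneg_comb \<Delta> v" unfolding nonneg_comb_def by blast
qed

lemma nn_ge0: "nonneg_comb \<Delta> v \<Longrightarrow> e \<in> \<Delta> \<Longrightarrow> co v e \<ge> 0"
  using nn_iff by fastforce

lemma zero_of_co: "(\<And>e. e \<in> \<Delta> \<Longrightarrow> co v e = 0) \<Longrightarrow> v = 0"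
  using expand[of v] by simp

lemma reflIn: "a \<in> \<Phi> \<Longrightarrow> b \<in> \<Phi> \<Longrightarrow> refl_root a b \<in> \<Phi>"
  using reflP by blast

lemma negP: assumes "a \<in> \<Phi>" shows "- a \<in> \<Phi>"
proof -
  have "a \<noteq> 0" using assms zP by auto
  then have "a \<bullet> a \<noteq> 0" by simp
  then have "refl_root a a = - a" unfolding refl_root_def by (simp add: algebra_simps scaleR_2)
  then show ?thesis using reflIn[OF assms assms] by simp
qed

lemma crI: "a \<in> \<Phi> \<Longrightarrow> b \<in> \<Phi> \<Longrightarrow> \<exists>i::int. 2 * (b \<bullet> a) / (a \<bullet> a) = of_int i"
  using cr unfolding crystallographic_def by (meson Ints_cases)

lemma F1: assumes x: "x \<in> \<Phi>" and y: "y \<in> \<Phi>" and xy: "x \<bullet> y > 0" and ne: "x \<noteq> y"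
  shows "x - y \<in> \<Phi>"
proof -
  have "x \<noteq> 0" "y \<noteq> 0" using x y zP by auto
  then have x0: "x \<bullet> x > 0" and y0: "y \<bullet> y > 0" by auto
  obtain i :: int where i: "2 * (x \<bullet> y) / (y \<bullet> y) = of_int i" using crI[OF y x] by blast
  obtain j :: int where j: "2 * (y \<bullet> x) / (x \<bullet> x) = of_int j" using crI[OF x y] by blast
  have ip: "i > 0" using i xy y0 by (metis divide_pos_pos mult_pos_pos of_int_0_less_iff zero_less_numeral)
  have jp: "j > 0" using j xy x0 by (metis divide_pos_pos inner_commute mult_pos_pos of_int_0_less_iff zero_less_numeral)
  have ii: "of_int i * (y \<bullet> y) = 2 * (x \<bullet> y)" using i y0 by (simp add: field_simps)
  have jj: "of_int j * (x \<bullet> x) = 2 * (x \<bullet> y)" using j x0 by (simp add: field_simps inner_commute)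
  have "(of_int (i * j)) * ((x \<bullet> x) * (y \<bullet> y)) = (of_int i * (y \<bullet> y)) * (of_int j * (x \<bullet> x))"
    by (simp add: algebra_simps)
  also have "\<dots> = 4 * (x \<bullet> y)^2" using ii jj by (simp add: power2_eq_square)
  also have "\<dots> \<le> 4 * ((x \<bullet> x) * (y \<bullet> y))" using Cauchy_Schwarz_ineq[of x y] by simp
  finally have "of_int (i * j) \<le> (4::real)" using x0 y0 by (simp add: mult_le_cancel_right_pos)
  then have ij: "i * j \<le> 4" by linarith
  show ?thesis
  proof (cases "i = 1")
    case True
    then have "2 * (x \<bullet> y) / (y \<bullet> y) = 1" using i by (simp only: of_int_1)
    then have "refl_root y x = x - y" unfolding refl_root_def by (simp only: scaleR_one)
    then show ?thesis using reflIn[OF y x] by simp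
  next
    case i1: False
    show ?thesis
    proof (cases "j = 1")
      case True
      then have "2 * (y \<bullet> x) / (x \<bullet> x) = 1" using j by (simp only: of_int_1)
      then have "refl_root x y = y - x" unfolding refl_root_def by (simp only: scaleR_one)
      then have "y - x \<in> \<Phi>" using reflIn[OF x y] by simp
      from negP[OF this] show ?thesis by simp
    next
      case False
      have "i \<ge> 2" "j \<ge> 2" using i1 False ip jp by auto
      then have "i * j \<ge> 2 * j" "i * j \<ge> i * 2" by (simp_all add: mult_right_mono mult_left_mono)
      then have "i = 2" "j = 2" using ij \<open>i \<ge> 2\<close> \<open>j \<ge> 2\<close> by linarith+
      then have "x \<bullet> y = y \<bullet> y" "x \<bullet> y = x \<bullet> x" using i j x0 y0 by (auto simp: inner_commute field_simps)
      then have "(x - y) \<bullet> (x - y) = 0" by (simp add: algebra_simps inner_commute)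
      then show ?thesis using ne by simp
    qed
  qed
qed

lemma F1p: assumes "x \<in> \<Phi>" "y \<in> \<Phi>" "x \<bullet> y < 0" "x \<noteq> - y" shows "x + y \<in> \<Phi>"
  using F1[OF assms(1) negP[OF assms(2)]] assms(3,4) by simp

lemma nn_neg_basis: "d \<in> \<Delta> \<Longrightarrow> \<not> nonneg_comb \<Delta> (- d)"
proof
  assume "d \<in> \<Delta>" "nonneg_comb \<Delta> (- d)"
  then have "co (- d) d \<ge> 0" using nn_ge0 by blast
  then show False using \<open>d \<in> \<Delta>\<close> by (simp add: co_neg co_basis)
qed

lemma N: assumes "a \<in> \<Delta>" "d \<in> \<Delta>" "a \<noteq> d" shows "a - d \<notin> \<Phi>"
proof
  assume "a - d \<in> \<Phi>"
  then have "nonneg_comb \<Delta> (a - d) \<or> nonneg_comb \<Delta> (- (a - d))" using pn by blast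
  then show False
  proof
    assume "nonneg_comb \<Delta> (a - d)"
    then have "co (a - d) d \<ge> 0" using nn_ge0 assms by blast
    then show False using assms by (simp add: co_diff co_basis)
  next
    assume "nonneg_comb \<Delta> (- (a - d))"
    then have "co (- (a - d)) a \<ge> 0" using nn_ge0 assms by blast
    then show False using assms by (simp add: co_neg co_diff co_basis)
  qed
qed

lemma ad: assumes "a \<in> \<Delta>" "d \<in> \<Delta>" "a \<noteq> d" shows "a \<bullet> d \<le> 0"
  using F1[of a d] N[OF assms] assms DP by force

lemma L: assumes w: "w \<in> \<Phi>" and wa: "w - a \<in> \<Phi>" and wd: "w - d \<in> \<Phi>"
  and a: "a \<in> \<Delta>" and d: "d \<in> \<Delta>" and ne: "a \<noteq> d" and nz: "w - a - d \<noteq> 0"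
  shows "w - a - d \<in> \<Phi>"
proof (cases "(w - a) \<bullet> d > 0")
  case True
  have "w - a \<noteq> d" using nz by auto
  then show ?thesis using F1[OF wa _ True] d DP by auto
next
  case c1: False
  show ?thesis
  proof (cases "(w - d) \<bullet> a > 0")
    case True
    have "w - d \<noteq> a" using nz by auto
    then have "w - d - a \<in> \<Phi>" using F1[OF wd _ True] a DP by auto
    then show ?thesis by (simp add: algebra_simps)
  next
    case False
    have "w \<noteq> 0" using w zP by auto
    then have w0: "w \<bullet> w > 0" by simp
    have adl: "a \<bullet> d \<le> 0" using ad[OF a d ne] .
    have "(w - a) \<bullet> d = w \<bullet> d - a \<bullet> d" "(w - d) \<bullet> a = w \<bullet> a - d \<bullet> a"
      by (simp_all add: inner_diff_left)
    then have h1: "w \<bullet> d \<le> a \<bullet> d" and h2: "w \<bullet> a \<le> a \<bullet> d"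
      using c1 False by (simp_all add: inner_commute)
    have "(w - d) \<bullet> (w - a) = w \<bullet> w - w \<bullet> a - w \<bullet> d + a \<bullet> d"
      by (simp add: inner_diff_left inner_diff_right inner_commute)
    then have "(w - d) \<bullet> (w - a) > 0" using h1 h2 w0 adl by linarith
    moreover have "w - d \<noteq> w - a" using ne by auto
    ultimately have "(w - d) - (w - a) \<in> \<Phi>" using F1[OF wd wa] by blast
    then have "a - d \<in> \<Phi>" by (simp add: algebra_simps)
    then show ?thesis using N[OF a d ne] by simp
  qed
qed

lemma Z: assumes a: "a \<in> \<Delta>" and b: "nonneg_comb \<Delta> b" and t: "nonneg_comb \<Delta> (t *\<^sub>R a - b)"
  shows "b = co b a *\<^sub>R a"
proof -
  have "co (b - co b a *\<^sub>R a) e = 0" if e: "e \<in> \<Delta>" for e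
  proof (cases "e = a")
    case True then show ?thesis using a by (simp add: co_diff co_scale co_basis)
  next
    case False
    have "co b e \<ge> 0" using nn_ge0[OF b e] .
    moreover have "co (t *\<^sub>R a - b) e \<ge> 0" using nn_ge0[OF t e] .
    ultimately show ?thesis using False a by (simp add: co_diff co_scale co_basis)
  qed
  then show ?thesis using zero_of_co by fastforce
qed

lemma redI: "a \<in> \<Phi> \<Longrightarrow> r *\<^sub>R a \<in> \<Phi> \<Longrightarrow> r = 1 \<or> r = -1"
  using red unfolding reduced_def by blast

lemma multcase: assumes a: "a \<in> \<Delta>" and g: "g = r *\<^sub>R a" "g \<in> \<Phi>"
  and gc: "nonneg_comb \<Delta> (g - real c *\<^sub>R a)" "g - real c *\<^sub>R a \<in> \<Phi>" and c: "c > 0"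
  shows False
proof -
  have aP: "a \<in> \<Phi>" using a DP by auto
  have r: "r = 1 \<or> r = -1" using redI[OF aP] g by simp
  have "g - real c *\<^sub>R a = (r - real c) *\<^sub>R a" using g by (simp add: algebra_simps)
  then have rc: "r - real c = 1 \<or> r - real c = -1" using redI[OF aP] gc(2) by simp
  have "co (g - real c *\<^sub>R a) a \<ge> 0" using nn_ge0[OF gc(1) a] .
  then have "r - real c \<ge> 0" using g a by (simp add: co_diff co_scale co_basis)
  then show False using r rc c by auto
qed

lemma nat_step_down: fixes P :: "nat \<Rightarrow> bool"
  shows "P a \<Longrightarrow> \<not> P b \<Longrightarrow> a < b \<Longrightarrow> \<exists>k. a \<le> k \<and> k < b \<and> P k \<and> \<not> P (Suc k)"
proof (induction b)
  case 0 then show ?case by simp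
next
  case (Suc b)
  show ?case
  proof (cases "P b")
    case True then show ?thesis using Suc by (intro exI[of _ b]) auto
  next
    case False
    then have "a \<noteq> b" using Suc by auto
    then obtain k where "a \<le> k \<and> k < b \<and> P k \<and> \<not> P (Suc k)" using Suc False by fastforce
    then show ?thesis by (intro exI[of _ k]) auto
  qed
qed

lemma S: assumes a: "a \<in> \<Delta>" and g: "g \<in> \<Phi>"
  and gc: "nonneg_comb \<Delta> (g - real c *\<^sub>R a)" "g - real c *\<^sub>R a \<in> \<Phi>" and c: "c > 0"
  shows "\<forall>k\<le>c. g - real k *\<^sub>R a \<in> \<Phi>"
proof (rule ccontr)
  define P where "P k \<longleftrightarrow> g - real k *\<^sub>R a \<in> \<Phi>" for k
  assume "\<not> (\<forall>k\<le>c. g - real k *\<^sub>R a \<in> \<Phi>)"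
  then obtain k' where k': "k' \<le> c" "\<not> P k'" unfolding P_def by auto
  have P0: "P 0" using g by (simp add: P_def)
  have Pc: "P c" using gc by (simp add: P_def)
  have "k' > 0" using k' P0 by (cases k') auto
  have "k' < c" using k' Pc le_neq_implies_less by blast
  obtain k0 where k0: "k0 < k'" "P k0" "\<not> P (Suc k0)"
    using nat_step_down[of P 0 k'] P0 k' \<open>k' > 0\<close> by auto
  obtain k1 where k1: "k' \<le> k1" "k1 < c" "\<not> P k1" "P (Suc k1)"
    using nat_step_down[of "\<lambda>k. \<not> P k" k' c] k' Pc \<open>k' < c\<close> by auto
  have aP: "a \<in> \<Phi>" using a DP by auto
  define x where "x = g - real k0 *\<^sub>R a"
  define y where "y = g - real (Suc k1) *\<^sub>R a"
  have xP: "x \<in> \<Phi>" using k0 by (simp add: P_def x_def)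
  have yP: "y \<in> \<Phi>" using k1 by (simp add: P_def y_def)
  have xa: "x - a \<notin> \<Phi>" using k0 by (simp add: P_def x_def algebra_simps)
  have ya: "y + a \<notin> \<Phi>" using k1 by (simp add: P_def y_def algebra_simps)
  have "x \<noteq> a"
  proof
    assume "x = a"
    then have "g = real (Suc k0) *\<^sub>R a" by (simp add: x_def algebra_simps)
    then show False using multcase[OF a _ g gc c] by blast
  qed
  then have x1: "x \<bullet> a \<le> 0" using F1[OF xP aP] xa by fastforce
  have "y \<noteq> - a"
  proof
    assume "y = - a"
    then have "g = real k1 *\<^sub>R a" by (simp add: y_def algebra_simps)
    then show False using multcase[OF a _ g gc c] by blast
  qed
  then have y1: "y \<bullet> a \<ge> 0" using F1p[OF yP aP] ya by fastforce
  have "a \<noteq> 0" using aP zP by auto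
  then have a0: "a \<bullet> a > 0" by simp
  have "x - y = (real (Suc k1) - real k0) *\<^sub>R a" by (simp add: x_def y_def algebra_simps)
  then have "x \<bullet> a - y \<bullet> a = (real (Suc k1) - real k0) * (a \<bullet> a)"
    by (metis inner_diff_left inner_scaleR_left)
  moreover have "real (Suc k1) - real k0 > 0" using k0 k1 by simp
  ultimately have "x \<bullet> a - y \<bullet> a > 0" using a0 by simp
  then show False using x1 y1 by linarith
qed

lemma nn_minus_basis: assumes v: "nonneg_comb \<Delta> v" and e: "e \<in> \<Delta>" and pos: "co v e > 0"
  shows "nonneg_comb \<Delta> (v - e)"
  unfolding nn_iff
proof
  fix f assume f: "f \<in> \<Delta>"
  obtain n :: nat where n: "co v f = real n" using v f nn_iff by blast
  show "\<exists>n::nat. co (v - e) f = real n"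
  proof (cases "f = e")
    case True
    then have "n \<ge> 1" using n pos by simp
    then show ?thesis using True n e by (intro exI[of _ "n - 1"]) (simp add: co_diff co_basis of_nat_diff)
  next
    case False then show ?thesis using n e by (simp add: co_diff co_basis)
  qed
qed

lemma nn_plus_basis: assumes v: "nonneg_comb \<Delta> v" and e: "e \<in> \<Delta>"
  shows "nonneg_comb \<Delta> (v + e)"
  unfolding nn_iff
proof
  fix f assume f: "f \<in> \<Delta>"
  obtain n :: nat where n: "co v f = real n" using v f nn_iff by blast
  show "\<exists>n::nat. co (v + e) f = real n"
  proof (cases "f = e")
    case True
    then show ?thesis using True n e by (intro exI[of _ "n + 1"]) (simp add: co_add co_basis)
  next
    case False then show ?thesis using n e by (simp add: co_add co_basis)
  qed
qed

lemma hgt_diff: assumes eD: "e \<in> \<Delta>" shows "(\<Sum>f\<in>\<Delta>. co (v - e) f) = (\<Sum>f\<in>\<Delta>. co v f) - 1"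
proof -
  have "(\<Sum>f\<in>\<Delta>. co (v - e) f) = (\<Sum>f\<in>\<Delta>. co v f) - (\<Sum>f\<in>\<Delta>. co e f)"
    by (simp add: co_diff sum_subtractf)
  moreover have "(\<Sum>f\<in>\<Delta>. co e f) = 1" using finD eD by (simp add: co_basis)
  ultimately show ?thesis by simp
qed

lemma choose_simple: assumes nu: "nonneg_comb \<Delta> nu" and nz: "nu \<noteq> 0"
  shows "\<exists>e\<in>\<Delta>. co nu e > 0 \<and> e \<bullet> nu > 0"
proof (rule ccontr)
  assume h: "\<not> ?thesis"
  have "nu \<bullet> nu = (\<Sum>e\<in>\<Delta>. co nu e *\<^sub>R e) \<bullet> nu" using expand[of nu] by simp
  also have "\<dots> = (\<Sum>e\<in>\<Delta>. co nu e * (e \<bullet> nu))" by (simp add: inner_sum_left)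
  also have "\<dots> \<le> 0"
  proof (rule sum_nonpos)
    fix e assume e: "e \<in> \<Delta>"
    have "co nu e \<ge> 0" using nn_ge0[OF nu e] .
    then show "co nu e * (e \<bullet> nu) \<le> 0" using h e
      by (metis less_eq_real_def mult_nonneg_nonpos mult_zero_left not_le)
  qed
  finally show False using nz by (metis inner_gt_zero_iff not_le)
qed

lemma main: assumes a: "a \<in> \<Delta>" and c: "c > 0"
  shows "\<forall>b g. real n = (\<Sum>e\<in>\<Delta>. co (g - b) e) \<longrightarrow> b \<in> \<Phi> \<longrightarrow> nonneg_comb \<Delta> b \<longrightarrow> g \<in> \<Phi> \<longrightarrow>
     nonneg_comb \<Delta> (g - b) \<longrightarrow> co (g - b) a = 0 \<longrightarrow> b \<noteq> a \<longrightarrow>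
     (\<forall>k\<le>c. g - real k *\<^sub>R a \<in> \<Phi>) \<longrightarrow> (\<forall>k\<le>c. b - real k *\<^sub>R a \<in> \<Phi>)"
proof (induction n)
  case 0
  show ?case
  proof (rule allI, rule allI, intro impI)
    fix b g
    assume h0: "real 0 = (\<Sum>e\<in>\<Delta>. co (g - b) e)" and "b \<in> \<Phi>" "nonneg_comb \<Delta> b" "g \<in> \<Phi>"
      and nn: "nonneg_comb \<Delta> (g - b)" and "co (g - b) a = 0" "b \<noteq> a"
      and gk: "\<forall>k\<le>c. g - real k *\<^sub>R a \<in> \<Phi>"
    have "\<forall>e\<in>\<Delta>. co (g - b) e = 0"
      using h0 sum_nonneg_eq_0_iff[OF finD, of "co (g - b)"] nn_ge0[OF nn] by auto
    then have "g - b = 0" using zero_of_co by blast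
    then show "\<forall>k\<le>c. b - real k *\<^sub>R a \<in> \<Phi>" using gk by simp
  qed
next
  case (Suc m)
  show ?case
  proof (rule allI, rule allI, intro impI)
    fix b g
    assume hs: "real (Suc m) = (\<Sum>e\<in>\<Delta>. co (g - b) e)" and bP: "b \<in> \<Phi>" and bn: "nonneg_comb \<Delta> b"
      and gP: "g \<in> \<Phi>" and nn: "nonneg_comb \<Delta> (g - b)" and ca: "co (g - b) a = 0" and ba: "b \<noteq> a"
      and gk: "\<forall>k\<le>c. g - real k *\<^sub>R a \<in> \<Phi>"
    have aP: "a \<in> \<Phi>" using a DP by auto
    have "g - b \<noteq> 0"
    proof
      assume "g - b = 0"
      then have "(\<Sum>e\<in>\<Delta>. co (g - b) e) = 0" by (simp add: co_zero)
      then show False using hs by simp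
    qed
    then obtain e where e: "e \<in> \<Delta>" "co (g - b) e > 0" "e \<bullet> (g - b) > 0"
      using choose_simple[OF nn] by blast
    have eP: "e \<in> \<Phi>" using e DP by auto
    have ea: "e \<noteq> a" using e ca by auto
    have nn': "nonneg_comb \<Delta> (g - b - e)" using nn_minus_basis[OF nn e(1,2)] .
    have hs': "real m = (\<Sum>f\<in>\<Delta>. co (g - b - e) f)" using hs hgt_diff[OF e(1), of "g - b"] by simp
    have ca': "co (g - b - e) a = 0" using ca ea e by (simp add: co_diff co_basis)
    have "g \<bullet> e > 0 \<or> b \<bullet> e < 0" using e(3) by (simp add: inner_diff_right inner_commute, linarith)
    then show "\<forall>k\<le>c. b - real k *\<^sub>R a \<in> \<Phi>"
    proof
      assume ge: "g \<bullet> e > 0"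
      have "g \<noteq> e"
      proof
        assume "g = e"
        then have "e - a \<in> \<Phi>" using gk c by (metis One_nat_def Suc_leI of_nat_1 scaleR_one)
        then show False using N[OF e(1) a ea] by simp
      qed
      then have g'P: "g - e \<in> \<Phi>" using F1[OF gP eP ge] by simp
      have g'k: "\<forall>k\<le>c. g - e - real k *\<^sub>R a \<in> \<Phi>"
      proof (intro allI)
        fix k show "k \<le> c \<longrightarrow> g - e - real k *\<^sub>R a \<in> \<Phi>"
        proof (induction k)
          case 0 then show ?case using g'P by simp
        next
          case (Suc k)
          show ?case
          proof
            assume kc: "Suc k \<le> c"
            define w where "w = g - real k *\<^sub>R a"
            have wP: "w \<in> \<Phi>" using gk kc by (simp add: w_def)
            have "w - a = g - real (Suc k) *\<^sub>R a" by (simp add: w_def algebra_simps)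
            then have waP: "w - a \<in> \<Phi>" using gk kc by presburger
            have weP: "w - e \<in> \<Phi>" using Suc kc by (simp add: w_def algebra_simps)
            have nz: "w - a - e \<noteq> 0"
            proof
              assume "w - a - e = 0"
              then have ge': "g - e = real (Suc k) *\<^sub>R a" by (simp add: w_def algebra_simps)
              have "nonneg_comb \<Delta> (real (Suc k) *\<^sub>R a - b)" using nn' ge' by (simp add: algebra_simps)
              then have bb: "b = co b a *\<^sub>R a" using Z[OF a bn] by blast
              then have "co b a = 1 \<or> co b a = -1" using redI[OF aP] bP by metis
              moreover have "co b a \<ge> 0" using nn_ge0[OF bn a] .
              ultimately have "b = a" using bb by auto
              then show False using ba by simp
            qed
            have "w - a - e \<in> \<Phi>" using L[OF wP waP weP a e(1) ea[symmetric] nz] .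
            then show "g - e - real (Suc k) *\<^sub>R a \<in> \<Phi>" by (simp add: w_def algebra_simps)
          qed
        qed
      qed
      have "g - e - b = g - b - e" by simp
      then show ?thesis using Suc.IH hs' bP bn g'P nn' ca' ba g'k by metis
    next
      assume be: "b \<bullet> e < 0"
      have "b \<noteq> - e" using bn nn_neg_basis[OF e(1)] by auto
      then have b'P: "b + e \<in> \<Phi>" using F1p[OF bP eP be] by simp
      have b'n: "nonneg_comb \<Delta> (b + e)" using nn_plus_basis[OF bn e(1)] .
      have b'a: "b + e \<noteq> a"
      proof
        assume "b + e = a"
        then have "a - e \<in> \<Phi>" using bP by (metis add_diff_cancel_right')
        then show False using N[OF a e(1) ea[symmetric]] by simp
      qed
      have eq: "g - (b + e) = g - b - e" by simp
      have b'k: "\<forall>k\<le>c. b + e - real k *\<^sub>R a \<in> \<Phi>"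
        using Suc.IH hs' b'P b'n gP nn' ca' b'a gk unfolding eq[symmetric] by metis
      show "\<forall>k\<le>c. b - real k *\<^sub>R a \<in> \<Phi>"
      proof (intro allI)
        fix k show "k \<le> c \<longrightarrow> b - real k *\<^sub>R a \<in> \<Phi>"
        proof (induction k)
          case 0 then show ?case using bP by simp
        next
          case (Suc k)
          show ?case
          proof
            assume kc: "Suc k \<le> c"
            define w where "w = b + e - real k *\<^sub>R a"
            have wP: "w \<in> \<Phi>" using b'k kc by (simp add: w_def)
            have "w - a = b + e - real (Suc k) *\<^sub>R a" by (simp add: w_def algebra_simps)
            then have waP: "w - a \<in> \<Phi>" using b'k kc by presburger
            have weP: "w - e \<in> \<Phi>" using Suc kc by (simp add: w_def algebra_simps)
            have nz: "w - a - e \<noteq> 0"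
            proof
              assume "w - a - e = 0"
              then have bb: "b = real (Suc k) *\<^sub>R a" by (simp add: w_def algebra_simps)
              then have "real (Suc k) = 1 \<or> real (Suc k) = -1" using redI[OF aP] bP by metis
              then have "b = a" using bb by auto
              then show False using ba by simp
            qed
            have "w - a - e \<in> \<Phi>" using L[OF wP waP weP a e(1) ea[symmetric] nz] .
            then show "b - real (Suc k) *\<^sub>R a \<in> \<Phi>" by (simp add: w_def algebra_simps)
          qed
        qed
      qed
    qed
  qed
qed

end

theorem lemma4:
  fixes \<Phi> \<Delta> :: "'a::euclidean_space set"
    and \<alpha> \<beta> \<gamma> :: 'a and c :: nat
  assumes "root_system \<Phi>" and "crystallographic \<Phi>" and "reduced \<Phi>"
    and "indecomposable \<Phi>" and "is_base \<Phi> \<Delta>"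
    and "\<gamma> \<in> pos_roots \<Phi> \<Delta>" and "\<alpha> \<in> \<Delta>" and "c > 0"
    and "\<gamma> - real c *\<^sub>R \<alpha> \<in> pos_roots \<Phi> \<Delta>"
    and "\<beta> \<in> pos_roots \<Phi> \<Delta>" and "root_le \<Delta> \<beta> \<gamma>"
    and "coeff_root \<Delta> \<alpha> \<beta> = coeff_root \<Delta> \<alpha> \<gamma>" and "\<beta> \<noteq> \<alpha>"
  shows "\<beta> - real c *\<^sub>R \<alpha> \<in> pos_roots \<Phi> \<Delta>"
proof -
  interpret R: RS \<Phi> \<Delta> using assms(1,2,3,5) by unfold_locales
  have gP: "\<gamma> \<in> \<Phi>" and bP: "\<beta> \<in> \<Phi>" and bn: "nonneg_comb \<Delta> \<beta>"
    and gcP: "\<gamma> - real c *\<^sub>R \<alpha> \<in> \<Phi>" and gcn: "nonneg_comb \<Delta> (\<gamma> - real c *\<^sub>R \<alpha>)"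
    using assms(6,9,10) unfolding pos_roots_def by auto
  have nn: "nonneg_comb \<Delta> (\<gamma> - \<beta>)" using assms(11) unfolding root_le_def .
  have ca: "R.co (\<gamma> - \<beta>) \<alpha> = 0" using assms(12) unfolding coeff_root_def R.co_def[symmetric]
    by (simp add: R.co_diff)
  have gk: "\<forall>k\<le>c. \<gamma> - real k *\<^sub>R \<alpha> \<in> \<Phi>" using R.S[OF assms(7) gP gcn gcP assms(8)] .
  have "\<forall>e\<in>\<Delta>. \<exists>n::nat. R.co (\<gamma> - \<beta>) e = real n" using nn R.nn_iff by blast
  then obtain f :: "'a \<Rightarrow> nat" where f: "\<forall>e\<in>\<Delta>. R.co (\<gamma> - \<beta>) e = real (f e)" by metis
  have hs: "real (\<Sum>e\<in>\<Delta>. f e) = (\<Sum>e\<in>\<Delta>. R.co (\<gamma> - \<beta>) e)" using f by simp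
  have bk: "\<forall>k\<le>c. \<beta> - real k *\<^sub>R \<alpha> \<in> \<Phi>"
    using R.main[OF assms(7,8), of "\<Sum>e\<in>\<Delta>. f e"] hs bP bn gP nn ca assms(13) gk by blast
  then have bcP: "\<beta> - real c *\<^sub>R \<alpha> \<in> \<Phi>" by simp
  have "nonneg_comb \<Delta> (\<beta> - real c *\<^sub>R \<alpha>)"
  proof (rule ccontr)
    assume "\<not> ?thesis"
    then have "nonneg_comb \<Delta> (- (\<beta> - real c *\<^sub>R \<alpha>))" using R.pn[OF bcP] by blast
    then have "nonneg_comb \<Delta> (real c *\<^sub>R \<alpha> - \<beta>)" by simp
    then have bb: "\<beta> = R.co \<beta> \<alpha> *\<^sub>R \<alpha>" using R.Z[OF assms(7) bn] by blast
    have aP: "\<alpha> \<in> \<Phi>" using assms(7) R.DP by auto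
    have "R.co \<beta> \<alpha> = 1 \<or> R.co \<beta> \<alpha> = -1" using R.redI[OF aP] bP bb by metis
    moreover have "R.co \<beta> \<alpha> \<ge> 0" using R.nn_ge0[OF bn assms(7)] .
    ultimately have "\<beta> = \<alpha>" using bb by auto
    then show False using assms(13) by simp
  qed
  then show ?thesis using bcP unfolding pos_roots_def by simp
qed

end
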